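(* Let $S$ be a periodic semigroup such that $E(S)\subseteq Z(S)$. Then the map $\pi:S\to E(S)$ is a semigroup homomorphism and the Clifford part $H(S)$ is a subsemigroup of $S$.
   Context: A semigroup $S$ is periodic if for every $x\in S$ some power $x^n$, $n\ge1$, is an idempotent; then the monogenic semigroup $\{x^n:n\in\mathbb N\}$ contains exactly one idempotent, denoted $\pi(x)$, defining $\pi:S\to E(S)$. $E(S)=\{x\in S:xx=x\}$ is the set of idempotents; $Z(S)=\{z\in S:\forall x\in S\ (xz=zx)\}$ is the center. $H(S)=\bigcup_{e\in E(S)}H_e$, where $H_e$ is the maximal subgroup of $S$ containing the idempotent $e$. *)

theory Defs
  imports Main
begin

text \<open>Positive powers in a semigroup: spow x n = x^(n+1).\<close>
fun spow :: "'a::semigroup_mult \<Rightarrow> nat \<Rightarrow> 'a" where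
  "spow x 0 = x"
| "spow x (Suc n) = x * spow x n"

definition idems :: "'a::semigroup_mult set" where
  "idems = {e. e * e = e}"

definition center :: "'a::semigroup_mult set" where
  "center = {z. \<forall>x. x * z = z * x}"

definition periodic :: "'a::semigroup_mult itself \<Rightarrow> bool" where
  "periodic _ \<longleftrightarrow> (\<forall>x::'a. \<exists>n. spow x n \<in> idems)"

definition pi_idem :: "'a::semigroup_mult \<Rightarrow> 'a" where
  "pi_idem x = (THE e. e \<in> idems \<and> (\<exists>n. e = spow x n))"

definition is_subgroup :: "'a::semigroup_mult set \<Rightarrow> bool" where
  "is_subgroup G \<longleftrightarrow> (\<forall>a\<in>G. \<forall>b\<in>G. a * b \<in> G) \<and>
     (\<exists>u\<in>G. \<forall>a\<in>G. u * a = a \<and> a * u = a \<and> (\<exists>b\<in>G. a * b = u \<and> b * a = u))"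

definition maxsubgroup :: "'a::semigroup_mult \<Rightarrow> 'a set" where
  "maxsubgroup e = \<Union>{G. is_subgroup G \<and> e \<in> G}"

definition clifford_part :: "'a::semigroup_mult set" where
  "clifford_part = (\<Union>e\<in>idems. maxsubgroup e)"

end

theory Submission
  imports Defs
begin

lemma spow_add: "spow x (Suc (a + b)) = spow x a * spow x b"
  by (induction a) (simp_all add: mult.assoc)

lemma spow_Suc': "spow x (Suc n) = spow x n * x"
  using spow_add[of x n 0] by simp

lemma spow_mult: "spow (spow x a) b = spow x (a + b * (a + 1))"
proof (induction b)
  case 0 then show ?case by simp
next
  case (Suc b)
  have "spow (spow x a) (Suc b) = spow x a * spow x (a + b * (a + 1))" using Suc by simp
  also have "\<dots> = spow x (Suc (a + (a + b * (a + 1))))" by (rule spow_add[symmetric])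
  finally show ?case by (simp add: algebra_simps)
qed

lemma spow_idem: "e * e = e \<Longrightarrow> spow e n = e"
  by (induction n) simp_all

lemma spow_uniq:
  assumes "spow x a \<in> idems" "spow x b \<in> idems" shows "spow x a = spow x b"
proof -
  have "spow x a = spow (spow x a) b" using assms by (simp add: spow_idem idems_def)
  also have "\<dots> = spow x (a + b * (a + 1))" by (rule spow_mult)
  also have "\<dots> = spow x (b + a * (b + 1))" by (simp add: algebra_simps)
  also have "\<dots> = spow (spow x b) a" by (rule spow_mult[symmetric])
  also have "\<dots> = spow x b" using assms by (simp add: spow_idem idems_def)
  finally show ?thesis .
qed

lemma pi_eq: "spow x n \<in> idems \<Longrightarrow> pi_idem x = spow x n"
  unfolding pi_idem_def
  by (rule the1_equality) (auto intro: spow_uniq)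

locale cen =
  assumes cen: "\<And>(e::'a::semigroup_mult) x. e * e = e \<Longrightarrow> x * e = e * x"
begin

lemma kk: "k * k = (k::'a) \<Longrightarrow> k * z * (k * w) = k * k * (z * w)"
proof -
  assume k: "k * k = k"
  have "k * z * (k * w) = k * (z * k) * w" by (simp add: mult.assoc)
  also have "\<dots> = k * (k * z) * w" using cen[OF k, of z] by simp
  finally show ?thesis by (simp add: mult.assoc)
qed

lemma spow_kmult: "k * k = k \<Longrightarrow> spow (k * (z::'a)) n = k * spow z n"
proof (induction n)
  case 0 then show ?case by simp
next
  case (Suc n)
  have "spow (k * z) (Suc n) = k * z * (k * spow z n)" using Suc by simp
  also have "\<dots> = k * (z * k) * spow z n" by (simp add: mult.assoc)
  also have "\<dots> = k * (k * z) * spow z n" using cen[OF Suc.prems] by simp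
  also have "\<dots> = k * spow z (Suc n)" using Suc.prems by (simp add: mult.assoc[symmetric])
  finally show ?case .
qed

definition unit_of :: "'a \<Rightarrow> 'a \<Rightarrow> bool" where
  "unit_of k z \<longleftrightarrow> k * z = z \<and> (\<exists>w. k * w = w \<and> z * w = k \<and> w * z = k)"

lemma unit_idem:
  assumes k: "k * k = (k::'a)" and u: "unit_of k z" and z: "z * z = z" shows "z = k"
proof -
  obtain w where w: "k * z = z" "k * w = w" "z * w = k" "w * z = k" using u unfolding unit_of_def by blast
  have "z = z * k" using cen[OF k, of z] w by simp
  also have "\<dots> = z * z * w" using w by (simp add: mult.assoc)
  also have "\<dots> = k" using w z by simp
  finally show ?thesis .
qed

lemma unit_mult:
  assumes k: "k * k = (k::'a)" and "unit_of k a" "unit_of k b" shows "unit_of k (a * b)"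
proof -
  obtain w where w: "k * a = a" "k * w = w" "a * w = k" "w * a = k" using assms unfolding unit_of_def by blast
  obtain v where v: "k * b = b" "k * v = v" "b * v = k" "v * b = k" using assms unfolding unit_of_def by blast
  have c: "\<And>y. y * k = k * y" using cen[OF k] .
  have "k * (a * b) = a * b" using w by (simp add: mult.assoc[symmetric])
  moreover have "k * (v * w) = v * w" using v by (simp add: mult.assoc[symmetric])
  moreover have "a * b * (v * w) = k"
  proof -
    have "a * b * (v * w) = a * (b * v) * w" by (simp add: mult.assoc)
    also have "\<dots> = k * (a * w)" using v c[of a] by (simp add: mult.assoc)
    finally show ?thesis using w k by simp
  qed
  moreover have "v * w * (a * b) = k"
  proof -
    have "v * w * (a * b) = v * (w * a) * b" by (simp add: mult.assoc)
    also have "\<dots> = k * (v * b)" using w c[of v] by (simp add: mult.assoc)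
    finally show ?thesis using v k by simp
  qed
  ultimately show ?thesis unfolding unit_of_def by blast
qed

lemma unit_pow:
  assumes k: "k * k = (k::'a)" and u: "unit_of k z" shows "unit_of k (spow z n)"
  by (induction n) (simp_all add: u unit_mult[OF k u])

lemma swap_idem:
  assumes g: "g * g = (g::'a)" and gxt: "g = x * t" shows "(t * x) * (t * x) = g"
proof -
  define u where "u = (t * x) * (t * x)"
  have g3: "x * t * (x * t) * (x * t) = g" using g gxt by simp
  have uu: "u * u = t * g * x"
  proof -
    have "u * u = t * (x * t * (x * t) * (x * t)) * x" unfolding u_def by (simp add: mult.assoc)
    then show ?thesis using g3 by simp
  qed
  have u3: "u * (t * x) = t * g * x"
  proof -
    have "u * (t * x) = t * (x * t * (x * t)) * x" unfolding u_def by (simp add: mult.assoc)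
    then show ?thesis using g gxt by simp
  qed
  have uid: "u * u = u"
  proof -
    have "u * u = t * (x * t * (x * t) * (x * t)) * x" unfolding u_def by (simp add: mult.assoc)
    also have "\<dots> = t * (x * t) * x" using g gxt by simp
    also have "\<dots> = u" using g gxt unfolding u_def by (simp add: mult.assoc)
    finally show ?thesis .
  qed
  have "g = x * (t * x * (t * x)) * t" using g3 by (simp add: mult.assoc)
  also have "\<dots> = x * u * t" unfolding u_def ..
  also have "\<dots> = u * g" using cen[OF uid, of x] gxt by (simp add: mult.assoc)
  finally have gu: "g = u * g" .
  have "u = t * g * x" using uu uid by simp
  also have "\<dots> = t * (g * g) * x" using g by simp
  also have "\<dots> = (t * g) * g * x" by (simp add: mult.assoc)
  also have "\<dots> = (g * t) * g * x" using cen[OF g, of t] by simp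
  also have "\<dots> = g * (t * g * x)" by (simp add: mult.assoc)
  finally have ug: "u = g * u" using uu uid by simp
  show ?thesis using gu ug cen[OF g, of u] unfolding u_def by simp
qed

lemma absorb:
  assumes g: "g * g = (g::'a)" and gxt: "g = x * t" and e: "spow x m \<in> idems"
  shows "g * spow x m = g"
proof -
  have tx: "t * x * (t * x) = g" by (rule swap_idem[OF g gxt])
  have c: "\<And>y. y * g = g * y" using cen[OF g] .
  have "unit_of g (g * x)"
    unfolding unit_of_def
  proof (intro conjI exI[of _ "t * g"])
    show "g * (g * x) = g * x" using g by (simp add: mult.assoc[symmetric])
    have "g * (t * g) = (g * t) * g" by (simp add: mult.assoc)
    also have "\<dots> = (t * g) * g" using c[of t] by simp
    also have "\<dots> = t * g" using g by (simp add: mult.assoc)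
    finally show "g * (t * g) = t * g" .
    show "g * x * (t * g) = g" using gxt g by (simp add: mult.assoc[symmetric])
    have "t * g * (g * x) = t * (g * g) * x" by (simp add: mult.assoc)
    then have "t * g * (g * x) = t * g * x" using g by simp
    also have "\<dots> = t * x * (t * x)" using gxt by (simp add: mult.assoc)
    also have "\<dots> = g" using tx by simp
    finally show "t * g * (g * x) = g" .
  qed
  then have "unit_of g (spow (g * x) m)" by (rule unit_pow[OF g])
  then have un: "unit_of g (g * spow x m)" using spow_kmult[OF g] by simp
  have ee: "spow x m * spow x m = spow x m" using e unfolding idems_def by simp
  have "g * spow x m * (g * spow x m) = g * (spow x m * g) * spow x m" by (simp add: mult.assoc)
  also have "\<dots> = g * (g * spow x m) * spow x m" using c[of "spow x m"] by simp
  also have "\<dots> = (g * g) * (spow x m * spow x m)" by (simp add: mult.assoc)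
  finally have "g * spow x m * (g * spow x m) = g * spow x m" using g ee by simp
  then show ?thesis using unit_idem[OF g un] by simp
qed

lemma hom:
  assumes gi: "spow (x * (y::'a)) p \<in> idems" and ei: "spow x m \<in> idems" and fi: "spow y n \<in> idems"
  shows "spow (x * y) p = spow x m * spow y n"
proof -
  define g e f where "g = spow (x * y) p" and "e = spow x m" and "f = spow y n"
  have g: "g * g = g" and e: "e * e = e" and f: "f * f = f"
    using gi ei fi unfolding g_def e_def f_def idems_def by auto
  obtain t where t: "g = x * t"
    by (cases p) (auto simp: g_def mult.assoc)
  have "\<exists>s. g = s * y"
  proof (cases p)
    case 0 then show ?thesis by (auto simp: g_def)
  next
    case (Suc q)
    have "g = spow (x * y) q * x * y" unfolding g_def Suc spow_Suc' by (simp add: mult.assoc)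
    then show ?thesis by blast
  qed
  then obtain s where s: "g = s * y" by blast
  have ge: "g * e = g" using absorb[OF g t ei] e_def by simp
  have "g = y * (s * y * s)"
  proof -
    have "y * (s * y * s) = (y * s) * (y * s)" by (simp add: mult.assoc)
    also have "\<dots> = g" using swap_idem[OF g s] by simp
    finally show ?thesis by simp
  qed
  then have gf: "g * f = g" using absorb[OF g _ fi] f_def by metis
  define k where "k = e * f"
  have k: "k * k = k" unfolding k_def
    by (metis e f cen[OF f, of e] mult.assoc)
  have ce: "\<And>z. z * e = e * z" using cen[OF e] .
  have cf: "\<And>z. z * f = f * z" using cen[OF f] .
  have ck: "\<And>z. z * k = k * z" using cen[OF k] .
  have ke: "k * e = k"
  proof -
    have "k * e = e * (f * e)" unfolding k_def by (simp add: mult.assoc)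
    also have "\<dots> = (e * e) * f" using ce[of f] by (simp add: mult.assoc)
    finally show ?thesis using e unfolding k_def by simp
  qed
  have kf: "k * f = k" unfolding k_def using f by (simp add: mult.assoc)
  have ux: "unit_of k (k * x)"
    unfolding unit_of_def
  proof (intro conjI exI[of _ "k * spow x (m + m)"])
    show "k * (k * x) = k * x" using k by (simp add: mult.assoc[symmetric])
    show "k * (k * spow x (m + m)) = k * spow x (m + m)" using k by (simp add: mult.assoc[symmetric])
    have xx: "x * spow x (m + m) = e" using spow_add[of x m m] e e_def by simp
    have "k * x * (k * spow x (m + m)) = k * k * (x * spow x (m + m))"
      by (rule kk[OF k])
    then show "k * x * (k * spow x (m + m)) = k" using xx k ke by simp
    have xx': "spow x (m + m) * x = e" using spow_add[of x m m] spow_Suc'[of x "m+m"] e e_def by simp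
    have "k * spow x (m + m) * (k * x) = k * k * (spow x (m + m) * x)"
      by (rule kk[OF k])
    then show "k * spow x (m + m) * (k * x) = k" using xx' k ke by simp
  qed
  have uy: "unit_of k (k * y)"
    unfolding unit_of_def
  proof (intro conjI exI[of _ "k * spow y (n + n)"])
    show "k * (k * y) = k * y" using k by (simp add: mult.assoc[symmetric])
    show "k * (k * spow y (n + n)) = k * spow y (n + n)" using k by (simp add: mult.assoc[symmetric])
    have xx: "y * spow y (n + n) = f" using spow_add[of y n n] f f_def by simp
    have "k * y * (k * spow y (n + n)) = k * k * (y * spow y (n + n))"
      by (rule kk[OF k])
    then show "k * y * (k * spow y (n + n)) = k" using xx k kf by simp
    have xx': "spow y (n + n) * y = f" using spow_add[of y n n] spow_Suc'[of y "n+n"] f f_def by simp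
    have "k * spow y (n + n) * (k * y) = k * k * (spow y (n + n) * y)"
      by (rule kk[OF k])
    then show "k * spow y (n + n) * (k * y) = k" using xx' k kf by simp
  qed
  have "k * x * (k * y) = k * (x * y)" using kk[OF k, of x y] k by simp
  then have "unit_of k (k * (x * y))" using unit_mult[OF k ux uy] by simp
  then have "unit_of k (spow (k * (x * y)) p)" by (rule unit_pow[OF k])
  then have un: "unit_of k (k * g)" using spow_kmult[OF k] g_def by simp
  have "k * g * (k * g) = k * g" using kk[OF k, of g g] g k by simp
  then have kg: "k * g = k" using unit_idem[OF k un] by simp
  have "g * k = g" unfolding k_def using ge gf by (simp add: mult.assoc[symmetric])
  then show ?thesis using kg ck[of g] unfolding g_def[symmetric] e_def[symmetric] f_def[symmetric] k_def by simp
qed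

definition U :: "'a \<Rightarrow> 'a set" where "U k = {z. unit_of k z}"

lemma U_sub: assumes k: "k * k = (k::'a)" shows "is_subgroup (U k)" "k \<in> U k"
proof -
  have kU: "k \<in> U k" unfolding U_def unit_of_def using k by blast
  show "k \<in> U k" by (rule kU)
  show "is_subgroup (U k)"
    unfolding is_subgroup_def
  proof (rule conjI)
    show "\<forall>a\<in>U k. \<forall>b\<in>U k. a * b \<in> U k"
      unfolding U_def using unit_mult[OF k] by blast
    show "\<exists>u\<in>U k. \<forall>a\<in>U k. u * a = a \<and> a * u = a \<and> (\<exists>b\<in>U k. a * b = u \<and> b * a = u)"
    proof (rule bexI[of _ k], intro ballI conjI)
    fix a assume a: "a \<in> U k"
    then obtain w where w: "k * a = a" "k * w = w" "a * w = k" "w * a = k" unfolding U_def unit_of_def by blast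
    show "k * a = a" by (rule w(1))
    show "a * k = a" using cen[OF k, of a] w by simp
    have "w \<in> U k" unfolding U_def unit_of_def using w by blast
    then show "\<exists>b\<in>U k. a * b = k \<and> b * a = k" using w by blast
  qed (rule kU)
  qed
qed

lemma in_H:
  assumes e: "e * e = (e::'a)" and G: "is_subgroup G" "e \<in> G" "a \<in> G" shows "a \<in> U e"
proof -
  obtain u where u: "u \<in> G" "\<And>a. a \<in> G \<Longrightarrow> u * a = a \<and> a * u = a \<and> (\<exists>b\<in>G. a * b = u \<and> b * a = u)"
    using G unfolding is_subgroup_def by blast
  obtain b where b: "b \<in> G" "e * b = u" "b * e = u" using u(2)[OF G(2)] by blast
  have "u = b * (e * e)" using b e by simp
  also have "\<dots> = b * e * e" by (simp add: mult.assoc)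
  also have "\<dots> = u * e" using b by simp
  also have "\<dots> = e" using u(2)[OF G(2)] by simp
  finally have ue: "u = e" .
  obtain c where c: "c \<in> G" "a * c = e" "c * a = e" using u(2)[OF G(3)] ue by blast
  have "e * c = c" using u(2)[OF c(1)] ue by simp
  then show ?thesis unfolding U_def unit_of_def using u(2)[OF G(3)] ue c by blast
qed

end

theorem proposition3p2:
  assumes "periodic TYPE('a::semigroup_mult)"
    and "(idems :: 'a set) \<subseteq> center"
  shows "(\<forall>x::'a. pi_idem x \<in> idems)
       \<and> (\<forall>x y::'a. pi_idem (x * y) = pi_idem x * pi_idem y)
       \<and> (\<forall>a\<in>(clifford_part :: 'a set). \<forall>b\<in>clifford_part. a * b \<in> clifford_part)"
proof -
  interpret cen
    by unfold_locales (use assms(2) in \<open>auto simp: idems_def center_def\<close>)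
  have per: "\<And>x::'a. \<exists>n. spow x n \<in> idems" using assms(1) unfolding periodic_def by blast
  have P1: "\<And>x::'a. pi_idem x \<in> idems" using per pi_eq by metis
  have P2: "\<And>x y::'a. pi_idem (x * y) = pi_idem x * pi_idem y"
  proof -
    fix x y :: 'a
    obtain p where p: "spow (x*y) p \<in> idems" using per by blast
    obtain m where m: "spow x m \<in> idems" using per by blast
    obtain n where n: "spow y n \<in> idems" using per by blast
    show "pi_idem (x * y) = pi_idem x * pi_idem y"
      using hom[OF p m n] pi_eq[OF p] pi_eq[OF m] pi_eq[OF n] by simp
  qed
  have P3: "\<And>a b::'a. a \<in> clifford_part \<Longrightarrow> b \<in> clifford_part \<Longrightarrow> a * b \<in> clifford_part"
  proof -
    fix a b :: 'a
    assume "a \<in> clifford_part" "b \<in> clifford_part"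
    then obtain e f G F where e: "e * e = e" and f: "f * f = f" and
      G: "is_subgroup G" "e \<in> G" "a \<in> G" and F: "is_subgroup F" "f \<in> F" "b \<in> F"
      unfolding clifford_part_def maxsubgroup_def idems_def by blast
    have ae: "a \<in> U e" by (rule in_H[OF e G])
    have bf: "b \<in> U f" by (rule in_H[OF f F])
    define k where "k = e * f"
    have k: "k * k = k" unfolding k_def by (metis e f cen[OF f, of e] mult.assoc)
    have ce: "\<And>z. z * e = e * z" using cen[OF e] .
    have cf: "\<And>z. z * f = f * z" using cen[OF f] .
    obtain w where w: "e * a = a" "e * w = w" "a * w = e" "w * a = e" using ae unfolding U_def unit_of_def by blast
    obtain v where v: "f * b = b" "f * v = v" "b * v = f" "v * b = f" using bf unfolding U_def unit_of_def by blast
    have "unit_of k (a * b)" unfolding unit_of_def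
    proof (intro conjI exI[of _ "v * w"])
      have "k * (a * b) = (f * e) * (a * b)" unfolding k_def using ce[of f] by simp
      also have "\<dots> = f * (e * a) * b" by (simp add: mult.assoc)
      finally have "k * (a * b) = f * (e * a) * b" .
      also have "\<dots> = (f * a) * b" using w by simp
      also have "\<dots> = (a * f) * b" using cf[of a] by simp
      also have "\<dots> = a * (f * b)" by (simp add: mult.assoc)
      finally show "k * (a * b) = a * b" using v by simp
      have "k * (v * w) = e * (f * v) * w" unfolding k_def by (simp add: mult.assoc)
      also have "\<dots> = (e * v) * w" using v by simp
      also have "\<dots> = (v * e) * w" using ce[of v] by simp
      also have "\<dots> = v * (e * w)" by (simp add: mult.assoc)
      finally show "k * (v * w) = v * w" using w by simp
      have "a * b * (v * w) = a * (b * v) * w" by (simp add: mult.assoc)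
      also have "\<dots> = (a * f) * w" using v by simp
      also have "\<dots> = (f * a) * w" using cf[of a] by simp
      also have "\<dots> = f * e" using w by (simp add: mult.assoc)
      finally show "a * b * (v * w) = k" unfolding k_def using ce[of f] by simp
      have "v * w * (a * b) = v * (w * a) * b" by (simp add: mult.assoc)
      also have "\<dots> = (v * e) * b" using w by simp
      also have "\<dots> = (e * v) * b" using ce[of v] by simp
      also have "\<dots> = e * f" using v by (simp add: mult.assoc)
      finally show "v * w * (a * b) = k" unfolding k_def .
    qed
    then have "a * b \<in> U k" unfolding U_def by simp
    then show "a * b \<in> clifford_part"
      unfolding clifford_part_def maxsubgroup_def idems_def using U_sub[OF k] k by blast
  qed
  show ?thesis using P1 P2 P3 by blast
qed

end
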